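(* Let $0<x\le 1$ and $y\ge1$. Then for every $0<a<1$, $$\Gamma(x,y)\ \ge\ \frac{a}{1+a(y-1)}\Big(\frac{a}{e}\Big)^{x-1}\Big(\frac{1-x}{1-a}\Big)^{x-1}.$$ In particular, for all $0<x\le1$ and all $0<a<1$, $$\Gamma(x)\ \ge\ a^{x}e^{1-x}\Big(\frac{1-x}{1-a}\Big)^{x-1}.$$ (When $x=1$ the factor $\big(\frac{1-x}{1-a}\big)^{x-1}$ is interpreted as $0^0=1$.)
   Context: For $x>0,y>0$ the Bigamma function is the (convergent) improper integral $\Gamma(x,y):=\int_0^1(-\ln t)^{x-1}\big(-\ln(1-t)\big)^{y-1}\,dt$. $\Gamma(x)$ denotes Euler's gamma function; note $\Gamma(x,1)=\Gamma(x)$. *)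

theory Defs
  imports "HOL-Analysis.Analysis"
begin

text \<open>Bigamma function, as a (Lebesgue) integral over the open interval (0,1);
for x>0, y>0 the integrand is nonnegative and integrable, so this coincides with
the improper Riemann integral.\<close>
definition Bigamma :: "real \<Rightarrow> real \<Rightarrow> real" where
  "Bigamma x y = (LINT t:{0<..<1}|lborel. (- ln t) powr (x - 1) * (- ln (1 - t)) powr (y - 1))"

text \<open>Power with the convention 0^0 = 1 (Isabelle's powr has 0 powr 0 = 0).\<close>
definition pow00 :: "real \<Rightarrow> real \<Rightarrow> real" where
  "pow00 b e = (if e = 0 then 1 else b powr e)"

end

theory Submission
  imports Defs
begin

lemma key_ln:
  fixes t p :: real assumes "0 < t" "t < 1" "0 < p"
  shows "- ln t \<le> t powr (-p) / (p * exp 1)"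
proof -
  define s where "s = - p * ln t"
  have "s \<le> exp (s - 1)" using exp_ge_add_one_self[of "s-1"] by simp
  also have "exp (s - 1) = t powr (-p) / exp 1"
    using assms by (simp add: s_def powr_def exp_diff)
  finally have "p * (- ln t) \<le> t powr (-p) / exp 1" by (simp add: s_def)
  thus ?thesis using assms by (simp add: field_simps)
qed

lemma lower_ln:
  fixes t p x :: real assumes "0 < t" "t < 1" "0 < p" "x \<le> 1"
  shows "(p * exp 1) powr (1 - x) * t powr (p * (1 - x)) \<le> (- ln t) powr (x - 1)"
proof -
  have pos: "0 < - ln t" using assms by simp
  have "(t powr (-p) / (p * exp 1)) powr (x - 1) \<le> (- ln t) powr (x - 1)"
    by (rule powr_mono2'[OF _ pos key_ln[OF assms(1-3)]]) (use assms in simp)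
  moreover have "(t powr (-p) / (p * exp 1)) powr (x - 1) = (t powr (-p)) powr (x - 1) / (p * exp 1) powr (x - 1)"
    by (rule powr_divide)
  moreover have "(t powr (-p)) powr (x - 1) = t powr (p * (1 - x))" by (simp add: powr_powr algebra_simps)
  moreover have "(p * exp 1) powr (x - 1) = inverse ((p * exp 1) powr (1 - x))"
    using powr_minus[of "p * exp 1" "1 - x"] by simp
  ultimately show ?thesis by (simp add: divide_inverse mult.commute)
qed

lemma upper_ln:
  fixes s r e :: real assumes "0 < s" "s < 1" "0 < r" "0 \<le> e"
  shows "(- ln s) powr e \<le> (r * exp 1) powr (-e) * s powr (- r * e)"
proof -
  have "(- ln s) powr e \<le> (s powr (-r) / (r * exp 1)) powr e"
    by (rule powr_mono2[OF assms(4) _ key_ln[OF assms(1-3)]]) (use assms in simp)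
  also have "\<dots> = (s powr (-r)) powr e / (r * exp 1) powr e"
    by (rule powr_divide)
  also have "\<dots> = (r * exp 1) powr (-e) * s powr (- r * e)"
    using powr_minus[of "r * exp 1" e] by (simp add: powr_powr divide_inverse mult.commute)
  finally show ?thesis .
qed

lemma int_refl:
  fixes c :: real assumes "c > -1"
  shows "(\<lambda>t. (1 - t) powr c) integrable_on {0<..<1}"
proof -
  have "(\<lambda>x. x powr c) integrable_on cbox 0 1"
    using integrable_on_powr_from_0[OF assms, of 1] by simp
  from integrable_affinity[OF this, of "-1" 1]
  have "(\<lambda>x. (-x + 1) powr c) integrable_on ((\<lambda>x. - x + 1) ` cbox 0 1)" by simp
  moreover have "(\<lambda>x. - x + 1) ` cbox 0 1 = {0..(1::real)}"
  proof -
    have "y \<in> (\<lambda>x. - x + 1) ` {0..1}" if "y \<in> {0..1}" for y::real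
      using that by (intro image_eqI[of _ _ "1 - y"]) auto
    thus ?thesis by auto
  qed
  ultimately have "(\<lambda>t. (1 - t) powr c) integrable_on {0..1}" by simp
  thus ?thesis by (simp add: integrable_on_open_interval_real)
qed


lemma bigamma_lower:
  fixes x y p :: real
  assumes x: "0 < x" "x \<le> 1" and y: "1 \<le> y" and p: "0 < p"
  shows "(p * exp 1) powr (1 - x) / (p * (1 - x) + y) \<le> Bigamma x y"
proof -
  define f where "f = (\<lambda>t::real. (- ln t) powr (x - 1) * (- ln (1 - t)) powr (y - 1))"
  define S where "S = {0<..<(1::real)}"
  define r where "r = x / (2 * y)"
  define C where "C = (r * exp 1) powr (- (y - 1))"
  have xy: "0 < x * y" using x y by simp
  have xy2: "x * (y - 1) < x * (2 * y)" using x y by (intro mult_strict_left_mono) auto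
  have r: "0 < r" "r * (y - 1) < x" using x y xy2 by (auto simp: r_def pos_divide_less_eq)
  have cont: "continuous_on S f" unfolding f_def S_def
    by (intro continuous_intros) auto
  have meas: "f \<in> borel_measurable (lebesgue_on S)"
    by (rule continuous_imp_measurable_on_sets_lebesgue[OF cont]) (simp add: S_def)
  have gint: "(\<lambda>t. C * (1 - t) powr (x - 1 - r * (y - 1))) integrable_on S"
    unfolding S_def using r integrable_cmul[OF int_refl[of "x - 1 - r * (y - 1)"], of C] by simp
  have bound: "norm (f t) \<le> C * (1 - t) powr (x - 1 - r * (y - 1))" if t: "t \<in> S" for t
  proof -
    have t0: "0 < t" "t < 1" using t by (auto simp: S_def)
    have a1: "0 \<le> (- ln t) powr (x - 1)" "0 \<le> (- ln (1 - t)) powr (y - 1)" by auto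
    have b1: "(- ln t) powr (x - 1) \<le> (1 - t) powr (x - 1)"
      using t0 x ln_le_minus_one[of t] by (intro powr_mono2') auto
    have b2: "(- ln (1 - t)) powr (y - 1) \<le> C * (1 - t) powr (- r * (y - 1))"
      unfolding C_def using t0 r y by (intro upper_ln) auto
    have "norm (f t) = (- ln t) powr (x - 1) * (- ln (1 - t)) powr (y - 1)"
      by (simp add: f_def)
    also have "\<dots> \<le> (1 - t) powr (x - 1) * (C * (1 - t) powr (- r * (y - 1)))"
      by (intro mult_mono b1 b2 a1) auto
    also have "\<dots> = C * (1 - t) powr (x - 1 - r * (y - 1))"
      using t0 by (simp add: powr_add[symmetric] algebra_simps)
    finally show ?thesis .
  qed
  have aint: "f absolutely_integrable_on S"
    by (rule measurable_bounded_by_integrable_imp_absolutely_integrable[OF meas _ gint bound])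
       (auto simp: S_def)
  have bm: "(\<lambda>t. indicator S t *\<^sub>R f t) \<in> borel_measurable lborel"
    unfolding f_def S_def by measurable
  have si: "set_integrable lborel S f"
    using aint bm unfolding set_integrable_def by (simp add: integrable_completion)
  have eq: "Bigamma x y = integral S f"
    unfolding Bigamma_def using set_borel_integral_eq_integral(2)[OF si] by (simp add: f_def S_def)
  have fint: "f integrable_on S" using set_borel_integral_eq_integral(1)[OF si] .
  define K where "K = (p * exp 1) powr (1 - x)"
  define a where "a = p * (1 - x) + y - 1"
  have px: "0 \<le> p * (1 - x)" using x p by simp
  have a: "a > -1" "a \<ge> 0" using x y px by (auto simp: a_def)
  have hi: "((\<lambda>t. t powr a) has_integral (1 / (a + 1))) {0..1}"
    using has_integral_powr_from_0[OF a(1), of 1] by simp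
  hence hi2: "((\<lambda>t. K * t powr a) has_integral (K / (a + 1))) S"
    unfolding S_def using has_integral_mult_right[OF hi, of K]
    using has_integral_open_interval[of "\<lambda>t. K * t powr a" "K / (a + 1)" 0 "1::real"] by simp
  have le: "K * t powr a \<le> f t" if t: "t \<in> S" for t
  proof -
    have t0: "0 < t" "t < 1" using t by (auto simp: S_def)
    have c1: "K * t powr (p * (1 - x)) \<le> (- ln t) powr (x - 1)"
      unfolding K_def using lower_ln[OF t0 p x(2)] .
    have c2: "t powr (y - 1) \<le> (- ln (1 - t)) powr (y - 1)"
      using t0 y ln_add_one_self_le_self2[of "- t"] by (intro powr_mono2) auto
    have "K * t powr a = (K * t powr (p * (1 - x))) * t powr (y - 1)"
      using t0 by (simp add: a_def powr_add[symmetric] algebra_simps)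
    also have "\<dots> \<le> (- ln t) powr (x - 1) * (- ln (1 - t)) powr (y - 1)"
      by (intro mult_mono c1 c2) auto
    finally show ?thesis by (simp add: f_def)
  qed
  have "K / (a + 1) \<le> integral S f"
    using has_integral_le[OF hi2 _ le] fint by (simp add: has_integral_integral)
  thus ?thesis using eq by (simp add: K_def a_def)
qed


lemma gamma_lower:
  fixes x p :: real
  assumes x: "0 < x" "x \<le> 1" and p: "0 < p"
  shows "(p * exp 1) powr (1 - x) / (p * (1 - x) + 1) \<le> Gamma x"
proof -
  define K where "K = (p * exp 1) powr (1 - x)"
  define b where "b = p * (1 - x) + 1"
  have px: "0 \<le> p * (1 - x)" using x p by simp
  have b: "b > 0" using px by (simp add: b_def)
  have g0: "((\<lambda>t. t powr (x - 1) / exp t) has_integral Gamma x) {0..}"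
    by (rule Gamma_integral_real) (use x in auto)
  have h0: "((\<lambda>u. K * exp (- b * u)) has_integral K * (1 / b)) {0..}"
    using has_integral_mult_right[OF has_integral_exp_minus_to_infinity[OF b, of 0], of K] by simp
  have neg: "negligible {u \<in> ({0..} :: real set) - {0<..}. f u \<noteq> 0}"
            "negligible {u \<in> ({0<..} :: real set) - {0..}. f u \<noteq> 0}" for f :: "real \<Rightarrow> real"
    by (rule negligible_subset[of "{0}"]; auto)+
  have g1: "((\<lambda>t. t powr (x - 1) / exp t) has_integral Gamma x) {0<..}"
    using g0 has_integral_spike_set_eq[OF neg] by blast
  have h1: "((\<lambda>u. K * exp (- b * u)) has_integral K * (1 / b)) {0<..}"
    using h0 has_integral_spike_set_eq[OF neg] by blast
  have le: "K * exp (- b * u) \<le> u powr (x - 1) / exp u" if u: "u \<in> {0<..}" for u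
  proof -
    have u0: "0 < u" using u by simp
    have t0: "0 < exp (- u)" "exp (- u) < 1" using u0 by auto
    have "K * exp (- u) powr (p * (1 - x)) \<le> (- ln (exp (- u))) powr (x - 1)"
      unfolding K_def by (rule lower_ln[OF t0 p x(2)])
    hence "K * exp (- (p * (1 - x)) * u) \<le> u powr (x - 1)"
      by (simp add: powr_def mult_ac)
    hence "K * exp (- (p * (1 - x)) * u) / exp u \<le> u powr (x - 1) / exp u"
      by (simp add: divide_right_mono)
    moreover have "K * exp (- b * u) = K * exp (- (p * (1 - x)) * u) / exp u"
      by (simp add: b_def algebra_simps exp_diff exp_add exp_minus field_simps)
    ultimately show ?thesis by simp
  qed
  have "K * (1 / b) \<le> Gamma x" by (rule has_integral_le[OF h1 g1 le])
  thus ?thesis by (simp add: K_def b_def)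
qed



lemma ident1:
  fixes a x :: real assumes "0 < a" "a < 1" "0 < x" "x < 1"
  shows "(a / exp 1) powr (x - 1) * ((1 - x) / (1 - a)) powr (x - 1)
         = ((1 - a) / (a * (1 - x)) * exp 1) powr (1 - x)"
proof -
  have "(a / exp 1) powr (x - 1) * ((1 - x) / (1 - a)) powr (x - 1)
        = (a / exp 1 * ((1 - x) / (1 - a))) powr (x - 1)"
    using assms by (subst powr_mult) auto
  also have "a / exp 1 * ((1 - x) / (1 - a)) = inverse ((1 - a) / (a * (1 - x)) * exp 1)"
    using assms by (simp add: field_simps)
  also have "(inverse ((1 - a) / (a * (1 - x)) * exp 1)) powr (x - 1)
        = ((1 - a) / (a * (1 - x)) * exp 1) powr (1 - x)"
  proof -
    define B where "B = (1 - a) / (a * (1 - x)) * exp 1"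
    have "inverse B powr (x - 1) = inverse (B powr (x - 1))"
      by (rule inverse_powr)
    also have "\<dots> = B powr (- (x - 1))" using powr_minus[of B "x - 1"] by simp
    finally show ?thesis by (simp add: B_def)
  qed
  finally show ?thesis .
qed

lemma ident2:
  fixes a x :: real assumes "0 < a"
  shows "a powr x * exp (1 - x) = a * (a / exp 1) powr (x - 1)"
proof -
  have "(a / exp 1) powr (x - 1) = a powr (x - 1) / exp (x - 1)"
  proof -
    have "exp 1 powr (x - 1) = exp (x - 1)" by (simp add: powr_def)
    thus ?thesis by (simp add: powr_divide)
  qed
  moreover have "a powr x = a * a powr (x - 1)" using assms powr_add[of a "x - 1" 1] by simp
  ultimately show ?thesis by (simp add: exp_diff field_simps)
qed

theorem mainTheorem5:
  shows "(\<forall>x y a::real. 0 < x \<and> x \<le> 1 \<and> 1 \<le> y \<and> 0 < a \<and> a < 1 \<longrightarrow>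
            Bigamma x y \<ge> a / (1 + a * (y - 1)) * (a / exp 1) powr (x - 1)
                           * pow00 ((1 - x) / (1 - a)) (x - 1))
       \<and> (\<forall>x a::real. 0 < x \<and> x \<le> 1 \<and> 0 < a \<and> a < 1 \<longrightarrow>
            Gamma x \<ge> a powr x * exp (1 - x) * pow00 ((1 - x) / (1 - a)) (x - 1))"
proof (intro conjI allI impI)
  fix x y a :: real
  assume h: "0 < x \<and> x \<le> 1 \<and> 1 \<le> y \<and> 0 < a \<and> a < 1"
  hence x: "0 < x" "x \<le> 1" and y: "1 \<le> y" and a: "0 < a" "a < 1" by auto
  have ay: "0 \<le> a * (y - 1)" using a y by simp
  show "Bigamma x y \<ge> a / (1 + a * (y - 1)) * (a / exp 1) powr (x - 1)
                           * pow00 ((1 - x) / (1 - a)) (x - 1)"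
  proof (cases "x = 1")
    case True
    have "1 / y \<le> Bigamma x y" using bigamma_lower[OF x y, of 1] True by simp
    moreover have "a / (1 + a * (y - 1)) \<le> 1 / y"
    proof -
      have D: "0 < 1 + a * (y - 1)" using ay by simp
      have N: "a * y \<le> 1 * (1 + a * (y - 1))" using a by (simp add: algebra_simps)
      have y0: "0 < y" using y by simp
      have "a \<le> (1 + a * (y - 1)) / y" using N y0 by (simp add: pos_le_divide_eq)
      hence "a \<le> 1 / y * (1 + a * (y - 1))" by simp
      thus ?thesis by (subst pos_divide_le_eq[OF D])
    qed
    ultimately show ?thesis using True a by (simp add: pow00_def)
  next
    case False
    hence x1: "x < 1" using x by simp
    define p where "p = (1 - a) / (a * (1 - x))"
    have p: "0 < p" using a x1 by (simp add: p_def)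
    have pp: "p * (1 - x) + y = (1 + a * (y - 1)) / a"
      using a x1 by (simp add: p_def field_simps)
    have "(p * exp 1) powr (1 - x) / (p * (1 - x) + y) \<le> Bigamma x y"
      by (rule bigamma_lower[OF x y p])
    moreover have "(p * exp 1) powr (1 - x) / (p * (1 - x) + y)
       = a / (1 + a * (y - 1)) * (a / exp 1) powr (x - 1) * pow00 ((1 - x) / (1 - a)) (x - 1)"
      using ident1[OF a x(1) x1] x1 pp by (simp add: pow00_def p_def)
    ultimately show ?thesis by simp
  qed
next
  fix x a :: real
  assume h: "0 < x \<and> x \<le> 1 \<and> 0 < a \<and> a < 1"
  hence x: "0 < x" "x \<le> 1" and a: "0 < a" "a < 1" by auto
  show "Gamma x \<ge> a powr x * exp (1 - x) * pow00 ((1 - x) / (1 - a)) (x - 1)"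
  proof (cases "x = 1")
    case True
    thus ?thesis using a by (simp add: pow00_def)
  next
    case False
    hence x1: "x < 1" using x by simp
    define p where "p = (1 - a) / (a * (1 - x))"
    have p: "0 < p" using a x1 by (simp add: p_def)
    have pp: "p * (1 - x) + 1 = 1 / a"
      using a x1 by (simp add: p_def field_simps)
    have "(p * exp 1) powr (1 - x) / (p * (1 - x) + 1) \<le> Gamma x"
      by (rule gamma_lower[OF x p])
    moreover have "(p * exp 1) powr (1 - x) / (p * (1 - x) + 1)
       = a powr x * exp (1 - x) * pow00 ((1 - x) / (1 - a)) (x - 1)"
      using ident1[OF a x(1) x1] ident2[OF a(1), of x] x1 pp by (simp add: pow00_def p_def)
    ultimately show ?thesis by simp
  qed
qed

end
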